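(* Let $n,r\ge 1$ be integers with $n\ge 8r$, and let $k$ be an integer with $\frac n2+3r\le k\le\frac{3n}{4}$. Let $S\subset\binom{[n]}{k}$, and let $A\subset\binom{[n]}{k-r}\setminus\partial^{r}S$ be a distance-$(2r+1)$ code. Then \[\big|\partial^{3r}S\cup\partial^{2r}A\big|\ \ge\ |S|+\frac{n^r|A|}{4(2r)^{3r}}.\]
   Context: $[n]=\{1,\dots,n\}$ and $\binom{[n]}{m}$ denotes the family of $m$-element subsets of $[n]$. For a family $F\subset 2^{[n]}$ and an integer $t\ge1$, the $t$-fold shadow $\partial^{t}F$ is the family of all sets obtainable by deleting $t$ elements from some set in $F$ (i.e. $\{y: y\subset x \text{ for some } x\in F,\ |x\setminus y|=t\}$). A family $A\subset 2^{[n]}$ is a distance-$d$ code if $|x\,\triangle\, y|\ge d$ for all distinct $x,y\in A$, where $\triangle$ denotes symmetric difference. *)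

theory Defs
  imports Complex_Main
begin

definition shadow :: "nat \<Rightarrow> 'a set set \<Rightarrow> 'a set set" where
  "shadow t F = {y. \<exists>x\<in>F. y \<subseteq> x \<and> card (x - y) = t}"

definition distance_code :: "nat \<Rightarrow> 'a set set \<Rightarrow> bool" where
  "distance_code d A \<longleftrightarrow> (\<forall>x\<in>A. \<forall>y\<in>A. x \<noteq> y \<longrightarrow> card ((x - y) \<union> (y - x)) \<ge> d)"

end

theory Submission
  imports Defs
begin


definition lvl :: "'a set \<Rightarrow> nat \<Rightarrow> 'a set set" where
  "lvl X p = {x. x \<subseteq> X \<and> card x = p}"

lemma finite_lvl: "finite X \<Longrightarrow> finite (lvl X p)"
  unfolding lvl_def by (rule finite_subset[of _ "Pow X"]) auto

lemma card_filter_sum: "finite A \<Longrightarrow> card {a\<in>A. P a} = (\<Sum>a\<in>A. if P a then 1 else 0)"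
  by (simp add: sum.inter_filter[symmetric])

lemma sum_card_swap: "finite A \<Longrightarrow> finite B \<Longrightarrow>
   (\<Sum>a\<in>A. card {b\<in>B. R a b}) = (\<Sum>b\<in>B. card {a\<in>A. R a b})"
  by (simp add: card_filter_sum) (rule sum.swap)

lemma card_diff_sym: "finite a \<Longrightarrow> finite x \<Longrightarrow> card a = card x \<Longrightarrow> card (x - a) = card (a - x)"
  by (metis Int_commute card_Diff_subset_Int finite_Int)

lemma shadow_lvl:
  assumes "finite X" "F \<subseteq> lvl X p"
  shows "shadow t F \<subseteq> lvl X (p - t)"
proof
  fix y assume "y \<in> shadow t F"
  then obtain x where x: "x \<in> F" "y \<subseteq> x" "card (x - y) = t" unfolding shadow_def by auto
  have "x \<subseteq> X" "card x = p" using x assms unfolding lvl_def by auto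
  moreover have "finite x" using \<open>x \<subseteq> X\<close> assms finite_subset by blast
  ultimately show "y \<in> lvl X (p - t)" using x unfolding lvl_def
    by (auto simp: card_Diff_subset finite_subset card_mono diff_diff_cancel)
qed

lemma card_supersets:
  assumes "finite X" "y \<subseteq> X" "card y \<le> p"
  shows "card {x \<in> lvl X p. y \<subseteq> x} = (card X - card y) choose (p - card y)"
proof -
  have fy: "finite y" using assms finite_subset by blast
  have "bij_betw (\<lambda>x. x - y) {x \<in> lvl X p. y \<subseteq> x} {P. P \<subseteq> X - y \<and> card P = p - card y}"
  proof (rule bij_betw_byWitness[where f'="\<lambda>P. P \<union> y"])
    show "\<forall>a\<in>{x \<in> lvl X p. y \<subseteq> x}. a - y \<union> y = a" by auto
    show "\<forall>a'\<in>{P. P \<subseteq> X - y \<and> card P = p - card y}. a' \<union> y - y = a'" by auto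
    show "(\<lambda>x. x - y) ` {x \<in> lvl X p. y \<subseteq> x} \<subseteq> {P. P \<subseteq> X - y \<and> card P = p - card y}"
      using fy by (auto simp: lvl_def card_Diff_subset)
    show "(\<lambda>P. P \<union> y) ` {P. P \<subseteq> X - y \<and> card P = p - card y} \<subseteq> {x \<in> lvl X p. y \<subseteq> x}"
    proof -
      { fix P assume P: "P \<subseteq> X - y" "card P = p - card y"
      have "finite P" using P assms finite_subset by blast
      hence "card (P \<union> y) = card P + card y" using P fy by (subst card_Un_disjoint) auto
      hence "P \<union> y \<in> {x \<in> lvl X p. y \<subseteq> x}" using P assms by (auto simp: lvl_def) }
      thus ?thesis by auto
    qed
  qed
  hence "card {x \<in> lvl X p. y \<subseteq> x} = card {P. P \<subseteq> X - y \<and> card P = p - card y}"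
    by (rule bij_betw_same_card)
  also have "\<dots> = card (X - y) choose (p - card y)" using assms by (simp add: n_subsets)
  finally show ?thesis using assms fy by (simp add: card_Diff_subset)
qed

lemma core:
  assumes X: "finite X" and F: "F \<subseteq> lvl X p" and tp: "t \<le> p"
  shows "card (shadow t F) * ((card X - (p - t)) choose t)
         = card F * (p choose t) + (\<Sum>x\<in>lvl X p - F. card {y\<in>shadow t F. y \<subseteq> x})"
proof -
  let ?G = "shadow t F" and ?L = "lvl X p"
  have GL: "?G \<subseteq> lvl X (p - t)" by (rule shadow_lvl[OF X F])
  have fG: "finite ?G" using finite_subset[OF GL finite_lvl[OF X]] .
  have fL: "finite ?L" by (rule finite_lvl[OF X])
  have "(\<Sum>y\<in>?G. card {x\<in>?L. y \<subseteq> x}) = (\<Sum>y\<in>?G. (card X - (p - t)) choose t)"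
  proof (rule sum.cong[OF refl])
    fix y assume "y \<in> ?G"
    hence y: "y \<subseteq> X" "card y = p - t" using GL by (auto simp: lvl_def)
    show "card {x\<in>?L. y \<subseteq> x} = (card X - (p - t)) choose t"
      using card_supersets[OF X y(1)] y tp by simp
  qed
  hence "card ?G * ((card X - (p - t)) choose t) = (\<Sum>y\<in>?G. card {x\<in>?L. y \<subseteq> x})" by simp
  also have "\<dots> = (\<Sum>x\<in>?L. card {y\<in>?G. y \<subseteq> x})" by (rule sum_card_swap[OF fG fL])
  also have "\<dots> = (\<Sum>x\<in>F. card {y\<in>?G. y \<subseteq> x}) + (\<Sum>x\<in>?L - F. card {y\<in>?G. y \<subseteq> x})"
    using sum.subset_diff[OF F fL] by (simp add: add.commute)
  also have "(\<Sum>x\<in>F. card {y\<in>?G. y \<subseteq> x}) = (\<Sum>x\<in>F. p choose t)"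
  proof (rule sum.cong[OF refl])
    fix x assume xF: "x \<in> F"
    hence x: "x \<subseteq> X" "card x = p" using F by (auto simp: lvl_def)
    have fx: "finite x" using x X finite_subset by blast
    have "{y\<in>?G. y \<subseteq> x} = {y. y \<subseteq> x \<and> card y = p - t}"
    proof (intro equalityI subsetI)
      fix y assume "y \<in> {y\<in>?G. y \<subseteq> x}"
      thus "y \<in> {y. y \<subseteq> x \<and> card y = p - t}" using GL by (auto simp: lvl_def)
    next
      fix y assume "y \<in> {y. y \<subseteq> x \<and> card y = p - t}"
      hence "y \<subseteq> x" "card y = p - t" by auto
      moreover hence "card (x - y) = t" using fx x tp by (simp add: card_Diff_subset finite_subset)
      ultimately show "y \<in> {y\<in>?G. y \<subseteq> x}" using xF unfolding shadow_def by auto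
    qed
    thus "card {y\<in>?G. y \<subseteq> x} = p choose t" using fx x tp
      by (simp add: n_subsets binomial_symmetric[symmetric])
  qed
  finally show ?thesis by simp
qed

lemma code_eq:
  assumes "distance_code d A" "a \<in> A" "a' \<in> A" "card ((a - a') \<union> (a' - a)) < d"
  shows "a = a'"
  using assms unfolding distance_code_def by force

lemma per_a_count:
  assumes X: "finite X" and a: "a \<subseteq> X" "card a = m" and rm: "r \<le> m"
  shows "(m choose r) * ((card X - m) choose r) \<le> card {x \<in> lvl X m. card (a - x) = r}"
proof -
  have fa: "finite a" using a X finite_subset by blast
  let ?P = "{R. R \<subseteq> a \<and> card R = r} \<times> {P. P \<subseteq> X - a \<and> card P = r}"
  let ?f = "\<lambda>(R, P). (a - R) \<union> P"
  have inj: "inj_on ?f ?P"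
  proof (rule inj_onI, clarify)
    fix R P R' P' assume "R \<subseteq> a" "P \<subseteq> X - a" "R' \<subseteq> a" "P' \<subseteq> X - a"
      and eq: "(a - R) \<union> P = (a - R') \<union> P'"
    have "R = a - ((a - R) \<union> P)" using \<open>R \<subseteq> a\<close> \<open>P \<subseteq> X - a\<close> by blast
    moreover have "R' = a - ((a - R') \<union> P')" using \<open>R' \<subseteq> a\<close> \<open>P' \<subseteq> X - a\<close> by blast
    moreover have "P = ((a - R) \<union> P) - a" using \<open>P \<subseteq> X - a\<close> by blast
    moreover have "P' = ((a - R') \<union> P') - a" using \<open>P' \<subseteq> X - a\<close> by blast
    ultimately show "R = R' \<and> P = P'" using eq by metis
  qed
  have img: "?f ` ?P \<subseteq> {x \<in> lvl X m. card (a - x) = r}"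
  proof -
    { fix R P assume R: "R \<subseteq> a" "card R = r" and P: "P \<subseteq> X - a" "card P = r"
    have fR: "finite R" using R fa finite_subset by blast
    have fP: "finite P" using P X finite_subset by blast
    have "card (a - R) = m - r" using R a fR by (simp add: card_Diff_subset)
    hence "card ((a - R) \<union> P) = m - r + r" using P fP fa by (subst card_Un_disjoint) auto
    moreover have "a - ((a - R) \<union> P) = R" using R P by blast
    ultimately have "(a - R) \<union> P \<in> {x \<in> lvl X m. card (a - x) = r}"
      using R P a rm by (auto simp: lvl_def) }
    thus ?thesis by auto
  qed
  have "card ?P \<le> card {x \<in> lvl X m. card (a - x) = r}"
    by (rule card_inj_on_le[OF inj img]) (simp add: finite_lvl[OF X])
  moreover have "card ?P = (card a choose r) * (card (X - a) choose r)"
    using fa X by (simp add: card_cartesian_product n_subsets)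
  moreover have "card (X - a) = card X - m" using fa a by (simp add: card_Diff_subset)
  ultimately show ?thesis using a by simp
qed

lemma step1_inj:
  assumes X: "finite X" and A: "A \<subseteq> lvl X m" "A \<inter> shadow r S = {}" and mk: "m = k - r" "r \<le> k"
    and code: "distance_code (2 * r + 1) A" and x: "x \<in> lvl X m"
  shows "card {a\<in>A. card (a - x) = r} \<le> card {s \<in> lvl X k - S. x \<subseteq> s}"
proof -
  have fx: "finite x" "x \<subseteq> X" "card x = m" using x X finite_subset by (auto simp: lvl_def)
  have fin: "finite a \<and> a \<subseteq> X \<and> card a = m" if "a \<in> A" for a
  proof -
    have "a \<subseteq> X \<and> card a = m" using A that by (auto simp: lvl_def)
    thus ?thesis using X finite_subset by blast
  qed
  have xa: "\<And>a. a \<in> A \<Longrightarrow> card (a - x) = r \<Longrightarrow> card (x - a) = r"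
    using fin fx card_diff_sym by metis
  have inj: "inj_on (\<lambda>a. a \<union> x) {a\<in>A. card (a - x) = r}"
  proof (rule inj_onI)
    fix a a' assume a: "a \<in> {a\<in>A. card (a - x) = r}" and a': "a' \<in> {a\<in>A. card (a - x) = r}"
      and eq: "a \<union> x = a' \<union> x"
    have "(a - a') \<union> (a' - a) \<subseteq> (x - a) \<union> (x - a')" using eq by blast
    hence "card ((a - a') \<union> (a' - a)) \<le> card ((x - a) \<union> (x - a'))"
      using fx by (intro card_mono) auto
    also have "\<dots> \<le> card (x - a) + card (x - a')" by (rule card_Un_le)
    also have "\<dots> = 2 * r" using xa a a' by simp
    finally show "a = a'" using code_eq[OF code] a a' by auto
  qed
  have img: "(\<lambda>a. a \<union> x) ` {a\<in>A. card (a - x) = r} \<subseteq> {s \<in> lvl X k - S. x \<subseteq> s}"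
  proof -
    { fix a assume aA: "a \<in> A" and ar: "card (a - x) = r"
    have fa: "finite a" "a \<subseteq> X" "card a = m" using fin aA by auto
    have "card (a \<union> x) = card a + card (x - a)"
      using fa fx by (metis Un_Diff_cancel card_Un_disjoint Diff_disjoint finite_Diff)
    hence ck: "card (a \<union> x) = k" using xa[OF aA ar] fa mk by simp
    moreover have "a \<union> x \<notin> S"
    proof
      assume "a \<union> x \<in> S"
      moreover have "card ((a \<union> x) - a) = r" using xa[OF aA ar] by (simp add: Un_Diff)
      ultimately have "a \<in> shadow r S" unfolding shadow_def by blast
      thus False using A(2) aA by blast
    qed
    ultimately have "a \<union> x \<in> lvl X k - S \<and> x \<subseteq> a \<union> x" using fa fx by (auto simp: lvl_def) }
    thus ?thesis by auto
  qed
  show ?thesis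
    by (rule card_inj_on_le[OF inj img]) (simp add: finite_lvl[OF X])
qed

lemma step2:
  assumes X: "finite X" and F: "F \<subseteq> lvl X m" and AF: "A \<subseteq> F"
    and code: "distance_code (2 * r + 1) A" and x: "x \<in> lvl X m" and rm: "2 * r \<le> m"
  shows "((m - r) choose r) * card {a\<in>A. card (a - x) = r}
         \<le> card {y \<in> shadow (2 * r) F. y \<subseteq> x} * ((2 * r) choose r)"
proof -
  let ?Ax = "{a\<in>A. card (a - x) = r}" and ?Yx = "{y \<in> shadow (2 * r) F. y \<subseteq> x}"
  have fx: "finite x" "x \<subseteq> X" "card x = m" using x X finite_subset by (auto simp: lvl_def)
  have fin: "finite a \<and> a \<subseteq> X \<and> card a = m" if "a \<in> A" for a
  proof -
    have "a \<subseteq> X \<and> card a = m" using AF F that by (auto simp: lvl_def)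
    thus ?thesis using X finite_subset by blast
  qed
  have GL: "shadow (2 * r) F \<subseteq> lvl X (m - 2 * r)" by (rule shadow_lvl[OF X F])
  have fAx: "finite ?Ax" using finite_subset[OF AF finite_subset[OF F finite_lvl[OF X]]] by simp
  have fYx: "finite ?Yx" using finite_subset[OF GL finite_lvl[OF X]] by simp
  have "(\<Sum>a\<in>?Ax. (m - r) choose r) \<le> (\<Sum>a\<in>?Ax. card {y\<in>?Yx. y \<subseteq> a})"
  proof (rule sum_mono)
    fix a assume a: "a \<in> ?Ax"
    have fa: "finite a" "a \<subseteq> X" "card a = m" using fin a by auto
    have "card (a \<inter> x) \<le> m" using fa by (metis card_mono Int_lower1)
    hence ca: "card (a \<inter> x) = m - r"
      using a fa card_Diff_subset_Int[of a x] by (simp add: Int_commute) arith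
    have sub: "{y. y \<subseteq> a \<inter> x \<and> card y = m - 2 * r} \<subseteq> {y\<in>?Yx. y \<subseteq> a}"
    proof
      fix y assume "y \<in> {y. y \<subseteq> a \<inter> x \<and> card y = m - 2 * r}"
      hence y: "y \<subseteq> a \<inter> x" "card y = m - 2 * r" by auto
      have "finite y" using y fa finite_subset by blast
      hence "card (a - y) = 2 * r" using y fa rm by (simp add: card_Diff_subset)
      hence "y \<in> shadow (2 * r) F" using a AF y unfolding shadow_def by blast
      thus "y \<in> {y\<in>?Yx. y \<subseteq> a}" using y by auto
    qed
    have "card {y. y \<subseteq> a \<inter> x \<and> card y = m - 2 * r} = (m - r) choose (m - 2 * r)"
      using n_subsets[of "a \<inter> x" "m - 2 * r"] fa ca by simp
    also have "\<dots> = (m - r) choose r"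
    proof -
      have "(m - r) - (m - 2 * r) = r" "m - 2 * r \<le> m - r" using rm by auto
      thus ?thesis using binomial_symmetric[of "m - 2 * r" "m - r"] by simp
    qed
    moreover have "card {y. y \<subseteq> a \<inter> x \<and> card y = m - 2 * r} \<le> card {y\<in>?Yx. y \<subseteq> a}"
      by (rule card_mono[OF _ sub]) (rule finite_subset[OF _ fYx], blast)
    ultimately show "(m - r) choose r \<le> card {y\<in>?Yx. y \<subseteq> a}" by simp
  qed
  also have "\<dots> = (\<Sum>y\<in>?Yx. card {a\<in>?Ax. y \<subseteq> a})" by (rule sum_card_swap[OF fAx fYx])
  also have "\<dots> \<le> (\<Sum>y\<in>?Yx. (2 * r) choose r)"
  proof (rule sum_mono)
    fix y assume y: "y \<in> ?Yx"
    have cy: "card y = m - 2 * r" "y \<subseteq> x" using y GL by (auto simp: lvl_def)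
    have "finite y" using cy fx finite_subset by blast
    hence cxy: "card (x - y) = 2 * r" using cy fx rm by (simp add: card_Diff_subset)
    have inj: "inj_on (\<lambda>a. x - a) {a\<in>?Ax. y \<subseteq> a}"
    proof (rule inj_onI)
      fix a a' assume a: "a \<in> {a\<in>?Ax. y \<subseteq> a}" and a': "a' \<in> {a\<in>?Ax. y \<subseteq> a}"
        and eq: "x - a = x - a'"
      have "(a - a') \<union> (a' - a) \<subseteq> (a - x) \<union> (a' - x)" using eq by blast
      hence "card ((a - a') \<union> (a' - a)) \<le> card ((a - x) \<union> (a' - x))"
        using fin a a' by (intro card_mono) auto
      also have "\<dots> \<le> card (a - x) + card (a' - x)" by (rule card_Un_le)
      also have "\<dots> = 2 * r" using a a' by simp
      finally show "a = a'" using code_eq[OF code] a a' by auto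
    qed
    have img: "(\<lambda>a. x - a) ` {a\<in>?Ax. y \<subseteq> a} \<subseteq> {R. R \<subseteq> x - y \<and> card R = r}"
    proof -
      { fix a assume a: "a \<in> ?Ax" "y \<subseteq> a"
        have "finite a" "card a = m" "card (a - x) = r" using a fin by auto
        hence "card (x - a) = r" using fx card_diff_sym[of a x] by simp
        hence "x - a \<in> {R. R \<subseteq> x - y \<and> card R = r}" using a by auto }
      thus ?thesis by auto
    qed
    have "card {a\<in>?Ax. y \<subseteq> a} \<le> card {R. R \<subseteq> x - y \<and> card R = r}"
      by (rule card_inj_on_le[OF inj img]) (use fx in \<open>simp add: finite_subset\<close>)
    also have "\<dots> = (2 * r) choose r" using fx cxy by (simp add: n_subsets)
    finally show "card {a\<in>?Ax. y \<subseteq> a} \<le> (2 * r) choose r" .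
  qed
  finally show ?thesis by (simp add: mult.commute)
qed



lemma est1:
  assumes r: "r \<ge> 1" and k: "2 * k \<ge> n + 6 * r"
  shows "real n ^ r / (4 * (2 * real r) ^ (3 * r)) \<le> real ((k - r) choose r)"
proof -
  have rk: "r \<le> k - r" using r k by linarith
  have rpos: "real r > 0" using r by simp
  have "(real (k - r) / real r) ^ r \<le> real ((k - r) choose r)"
    by (rule binomial_ge_n_over_k_pow_k[OF rk])
  moreover have "(real n / (2 * real r)) ^ r \<le> (real (k - r) / real r) ^ r"
  proof (rule power_mono)
    have "real n / 2 \<le> real (k - r)" using k rk by (simp add: of_nat_diff)
    hence "real n / 2 / real r \<le> real (k - r) / real r" by (rule divide_right_mono) (use rpos in auto)
    moreover have "real n / (2 * real r) = real n / 2 / real r" by simp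
    ultimately show "real n / (2 * real r) \<le> real (k - r) / real r" by linarith
  qed simp
  moreover have "real n ^ r / (4 * (2 * real r) ^ (3 * r)) \<le> (real n / (2 * real r)) ^ r"
  proof -
    have "(2 * real r) ^ r \<le> (2 * real r) ^ (3 * r)" by (rule power_increasing) (use r in auto)
    moreover have "0 \<le> (2 * real r) ^ (3 * r)" by simp
    ultimately have "(2 * real r) ^ r \<le> 4 * (2 * real r) ^ (3 * r)" by linarith
    hence "real n ^ r / (4 * (2 * real r) ^ (3 * r)) \<le> real n ^ r / (2 * real r) ^ r"
      by (rule divide_left_mono) (use rpos in auto)
    thus ?thesis by (simp add: power_divide)
  qed
  ultimately show ?thesis by linarith
qed

lemma est2:
  assumes r: "r \<ge> 1" and k: "2 * k \<ge> n + 6 * r" and k2: "4 * k \<le> 3 * n"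
  shows "real n ^ r / (4 * (2 * real r) ^ (3 * r)) * real (((2 * r) choose r) * ((n - k + 3 * r) choose (2 * r)))
     \<le> real (((k - 2 * r) choose r) * ((k - r) choose r) * ((n - k + r) choose r))"
proof -
  define b where "b = n - k + 3 * r"
  have rpos: "real r > 0" using r by simp
  have nk: "k \<le> n" using k2 by linarith
  have hb: "real b = real n - real k + 3 * real r" using nk unfolding b_def by simp
  have h1: "real (k - 2 * r) = real k - 2 * real r" using k by (simp add: of_nat_diff)
  have h2: "real (k - r) = real k - real r" using k by (simp add: of_nat_diff)
  have h3: "real (n - k + r) = real n - real k + real r" using nk by (simp add: of_nat_diff)
  have cb: "((2 * r) choose r) * (b choose (2 * r)) \<le> b ^ (2 * r)"
  proof -
    have "(b choose (2 * r)) * ((2 * r) choose r) = (b choose r) * ((b - r) choose (2 * r - r))"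
      by (rule choose_mult) (auto simp: b_def)
    also have "\<dots> \<le> b ^ r * b ^ r"
    proof (rule mult_mono)
      show "b choose r \<le> b ^ r" by (rule binomial_le_pow) (auto simp: b_def)
      have "(b - r) choose r \<le> b choose r" by (rule binomial_right_mono) simp
      also have "\<dots> \<le> b ^ r" by (rule binomial_le_pow) (auto simp: b_def)
      finally show "(b - r) choose (2 * r - r) \<le> b ^ r" by simp
    qed auto
    moreover have "b ^ r * b ^ r = b ^ (2 * r)" by (simp add: power_add[symmetric] mult_2)
    ultimately show ?thesis by (simp add: mult.commute)
  qed
  have g0: "real n ^ r / (4 * (2 * real r) ^ (3 * r)) \<ge> 0" by simp
  have "real n ^ r / (4 * (2 * real r) ^ (3 * r)) * real (((2 * r) choose r) * (b choose (2 * r)))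
      \<le> real n ^ r / (4 * (2 * real r) ^ (3 * r)) * real b ^ (2 * r)"
  proof (rule mult_left_mono[OF _ g0])
    have "real (((2 * r) choose r) * (b choose (2 * r))) \<le> real (b ^ (2 * r))"
      using cb by (simp only: of_nat_le_iff)
    thus "real (((2 * r) choose r) * (b choose (2 * r))) \<le> real b ^ (2 * r)" by simp
  qed
  also have "\<dots> = (real n * real b ^ 2 / (8 * real r ^ 3)) ^ r / 4"
  proof -
    have e1: "(2 * real r) ^ (3 * r) = (8 * real r ^ 3) ^ r"
      by (simp add: power_mult power_mult_distrib)
    have e2: "real b ^ (2 * r) = (real b ^ 2) ^ r" by (simp add: power_mult)
    have e3: "(real n * real b ^ 2 / (8 * real r ^ 3)) ^ r = real n ^ r * (real b ^ 2) ^ r / (8 * real r ^ 3) ^ r"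
      by (simp add: power_divide power_mult_distrib)
    show ?thesis unfolding e1 e2 e3 by simp
  qed
  also have "\<dots> \<le> (real n * real b ^ 2 / (8 * real r ^ 3)) ^ r" by simp
  also have "\<dots> \<le> ((real (k - 2 * r) * real (k - r) * real (n - k + r)) / real r ^ 3) ^ r"
  proof (rule power_mono)
    have bb1: "real b \<le> real (k - 2 * r)" using hb h1 k by linarith
    have bb2: "real b \<le> real (k - r)" using hb h2 k by linarith
    have bn: "real n / 8 \<le> real (n - k + r)" using h3 k2 by linarith
    have "real b ^ 2 * (real n / 8) \<le> (real (k - 2 * r) * real (k - r)) * real (n - k + r)"
    proof (rule mult_mono)
      show "real b ^ 2 \<le> real (k - 2 * r) * real (k - r)"
        unfolding power2_eq_square by (rule mult_mono) (use bb1 bb2 in auto)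
    qed (use bn in auto)
    hence "real n * real b ^ 2 / 8 / real r ^ 3 \<le> (real (k - 2 * r) * real (k - r) * real (n - k + r)) / real r ^ 3"
      using rpos by (intro divide_right_mono) (auto simp: field_simps)
    thus "real n * real b ^ 2 / (8 * real r ^ 3) \<le> (real (k - 2 * r) * real (k - r) * real (n - k + r)) / real r ^ 3"
      by (simp add: field_simps)
  qed simp
  also have "\<dots> = (real (k - 2 * r) / real r) ^ r * (real (k - r) / real r) ^ r * (real (n - k + r) / real r) ^ r"
  proof -
    have "real (k - 2 * r) * real (k - r) * real (n - k + r) / real r ^ 3
        = (real (k - 2 * r) / real r) * (real (k - r) / real r) * (real (n - k + r) / real r)"
      by (simp add: power3_eq_cube)
    thus ?thesis by (simp only: power_mult_distrib)
  qed
  also have "\<dots> \<le> real ((k - 2 * r) choose r) * real ((k - r) choose r) * real ((n - k + r) choose r)"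
    by (intro mult_mono binomial_ge_n_over_k_pow_k) (use k in auto)
  finally show ?thesis by (simp add: b_def)
qed


lemma final_arith:
  fixes s t g al P Q EA EB DA DB cA cB gB be Kc ga :: real
  assumes nn: "s \<ge> 0" "t \<ge> 0" "al \<ge> 0" "P \<ge> 0" "Q \<ge> 0" "ga \<ge> 0" "be \<ge> 0"
    and pos: "DA > 0" "DB > 0" "gB > 0" "Kc > 0"
    and h1: "t * DA = s * cA + EA" "EA \<ge> P" "cA \<ge> DA"
    and h2: "g * DB = (t + al) * cB + EB" "gB * EB \<ge> be * Q" "cB \<ge> DB"
    and h3: "P + Q \<ge> al * Kc"
    and e1: "ga * DA \<le> Kc" and e2: "ga * gB * DB \<le> be * Kc"
  shows "g \<ge> s + ga * al"
proof -
  have "s * cA \<ge> s * DA" using h1(3) nn(1) by (simp add: mult_left_mono)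
  hence "t * DA \<ge> s * DA + P" using h1 by linarith
  hence t1: "t \<ge> s + P / DA" using pos(1) by (simp add: field_simps)
  have "t * DB \<le> t * cB" by (rule mult_left_mono) (use h2(3) nn(2) in auto)
  moreover have "(t + al) * cB = t * cB + al * cB" by (simp add: distrib_right)
  moreover have "al * cB \<ge> 0" using nn(3) h2(3) pos(2) by simp
  ultimately have "(t + al) * cB \<ge> t * DB" by linarith
  hence "g * DB \<ge> t * DB + EB" using h2(1) by linarith
  hence "g \<ge> t + EB / DB" using pos(2) by (simp add: field_simps)
  moreover have "EB / DB \<ge> be * Q / (gB * DB)"
  proof -
    have "EB \<ge> be * Q / gB" using h2(2) pos(3) by (simp add: field_simps)
    hence "EB / DB \<ge> be * Q / gB / DB" by (rule divide_right_mono) (use pos(2) in auto)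
    moreover have "be * Q / gB / DB = be * Q / (gB * DB)" by (simp add: divide_divide_eq_left)
    ultimately show ?thesis by linarith
  qed
  ultimately have g1: "g \<ge> s + P / DA + be * Q / (gB * DB)" using t1 by linarith
  have "ga * P \<le> Kc * (P / DA)"
  proof -
    have "ga \<le> Kc / DA" using e1 pos(1) by (simp add: field_simps)
    hence "ga * P \<le> Kc / DA * P" by (rule mult_right_mono) (use nn(4) in auto)
    moreover have "Kc / DA * P = Kc * (P / DA)" by simp
    ultimately show ?thesis by linarith
  qed
  moreover have "ga * Q \<le> Kc * (be * Q / (gB * DB))"
  proof -
    have "ga \<le> be * Kc / (gB * DB)" using e2 pos by (simp add: field_simps)
    hence "ga * Q \<le> be * Kc / (gB * DB) * Q" by (rule mult_right_mono) (use nn(5) in auto)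
    moreover have "be * Kc / (gB * DB) * Q = Kc * (be * Q / (gB * DB))" by simp
    ultimately show ?thesis by linarith
  qed
  moreover have "ga * (al * Kc) \<le> ga * (P + Q)" using h3 nn(6) by (simp add: mult_left_mono)
  ultimately have "Kc * (ga * al) \<le> Kc * (P / DA + be * Q / (gB * DB))"
    by (simp add: algebra_simps)
  hence "ga * al \<le> P / DA + be * Q / (gB * DB)" using pos(4) by simp
  thus ?thesis using g1 by linarith
qed

theorem lemma3:
  fixes n r k :: nat and S A :: "nat set set"
  assumes "n \<ge> 1" "r \<ge> 1" "n \<ge> 8 * r"
    and "real n / 2 + 3 * real r \<le> real k" "real k \<le> 3 * real n / 4"
    and "S \<subseteq> {x. x \<subseteq> {1..n} \<and> card x = k}"
    and "A \<subseteq> {x. x \<subseteq> {1..n} \<and> card x = k - r} - shadow r S"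
    and "distance_code (2 * r + 1) A"
  shows "real (card (shadow (3 * r) S \<union> shadow (2 * r) A))
           \<ge> real (card S) + real n ^ r * real (card A) / (4 * (2 * real r) ^ (3 * r))"
proof -
  define X :: "nat set" where "X = {1..n}"
  define m where "m = k - r"
  have fX: "finite X" and cX: "card X = n" unfolding X_def by auto
  have r1: "r \<ge> 1" using assms by simp
  have k1: "2 * k \<ge> n + 6 * r" using assms(4) by linarith
  have k2: "4 * k \<le> 3 * n" using assms(5) by linarith
  have kn: "k \<le> n" using k2 by linarith
  have SL: "S \<subseteq> lvl X k" using assms(6) unfolding lvl_def X_def by auto
  have AL: "A \<subseteq> lvl X m" using assms(7) unfolding lvl_def X_def m_def by auto
  have AT: "A \<inter> shadow r S = {}" using assms(7) by auto
  have code: "distance_code (2 * r + 1) A" by (rule assms(8))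
  define T where "T = shadow r S"
  have TL: "T \<subseteq> lvl X m" unfolding T_def m_def by (rule shadow_lvl[OF fX SL])
  define F where "F = T \<union> A"
  have FL: "F \<subseteq> lvl X m" using TL AL unfolding F_def by auto
  have fL: "\<And>p. finite (lvl X p)" by (rule finite_lvl[OF fX])
  have fT: "finite T" using finite_subset[OF TL fL] .
  have fA: "finite A" using finite_subset[OF AL fL] .
  have fS: "finite S" using finite_subset[OF SL fL] .
  have cF: "card F = card T + card A" unfolding F_def using fT fA AT T_def
    by (subst card_Un_disjoint) auto
  define G where "G = shadow (2 * r) F"
  have GG: "G \<subseteq> shadow (3 * r) S \<union> shadow (2 * r) A"
  proof
    fix y assume "y \<in> G"
    then obtain x where x: "x \<in> F" "y \<subseteq> x" "card (x - y) = 2 * r"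
      unfolding G_def shadow_def by auto
    show "y \<in> shadow (3 * r) S \<union> shadow (2 * r) A"
    proof (cases "x \<in> A")
      case True thus ?thesis using x unfolding shadow_def by auto
    next
      case False
      hence "x \<in> T" using x F_def by auto
      then obtain s where s: "s \<in> S" "x \<subseteq> s" "card (s - x) = r" unfolding T_def shadow_def by auto
      have "s \<subseteq> X" using s SL by (auto simp: lvl_def)
      hence "finite s" using fX finite_subset by blast
      have "s - y = (s - x) \<union> (x - y)" using s x by blast
      moreover have "card ((s - x) \<union> (x - y)) = card (s - x) + card (x - y)"
        by (rule card_Un_disjoint) (use \<open>finite s\<close> x s in \<open>auto intro: finite_subset\<close>)
      ultimately have "card (s - y) = r + 2 * r" using s x by simp
      hence "y \<in> shadow (3 * r) S" using s x unfolding shadow_def by auto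
      thus ?thesis by simp
    qed
  qed
  have fGG: "finite (shadow (3 * r) S \<union> shadow (2 * r) A)"
    using finite_subset[OF shadow_lvl[OF fX SL] fL] finite_subset[OF shadow_lvl[OF fX AL] fL] by simp
  have cG: "card G \<le> card (shadow (3 * r) S \<union> shadow (2 * r) A)" by (rule card_mono[OF fGG GG])
  define mu where "mu x = card {a\<in>A. card (a - x) = r}" for x
  define E1 where "E1 = (\<Sum>s\<in>lvl X k - S. card {x\<in>T. x \<subseteq> s})"
  define E2 where "E2 = (\<Sum>x\<in>lvl X m - F. card {y\<in>G. y \<subseteq> x})"
  define P where "P = (\<Sum>x\<in>T. mu x)"
  define Q where "Q = (\<Sum>x\<in>lvl X m - F. mu x)"
  have core1: "card T * ((n - k + r) choose r) = card S * (k choose r) + E1"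
  proof -
    have "card X - (k - r) = n - k + r" using cX kn k1 by simp
    thus ?thesis using core[OF fX SL, of r] k1 unfolding T_def E1_def by simp
  qed
  have core2: "card G * ((n - k + 3 * r) choose (2 * r)) = card F * (m choose (2 * r)) + E2"
  proof -
    have "card X - (m - 2 * r) = n - k + 3 * r" using cX kn k1 unfolding m_def by simp
    moreover have "2 * r \<le> m" using k1 unfolding m_def by simp
    ultimately show ?thesis using core[OF fX FL, of "2 * r"] unfolding G_def E2_def by simp
  qed
  have E1P: "E1 \<ge> P"
  proof -
    have "E1 = (\<Sum>x\<in>T. card {s\<in>lvl X k - S. x \<subseteq> s})"
      unfolding E1_def by (rule sum_card_swap) (use fL fT in auto)
    moreover have "(\<Sum>x\<in>T. mu x) \<le> (\<Sum>x\<in>T. card {s\<in>lvl X k - S. x \<subseteq> s})"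
    proof (rule sum_mono)
      fix x assume "x \<in> T"
      thus "mu x \<le> card {s\<in>lvl X k - S. x \<subseteq> s}" unfolding mu_def
        using step1_inj[OF fX AL AT m_def] k1 code TL by auto
    qed
    ultimately show ?thesis unfolding P_def by simp
  qed
  have E2Q: "((2 * r) choose r) * E2 \<ge> ((m - r) choose r) * Q"
  proof -
    have "((m - r) choose r) * Q = (\<Sum>x\<in>lvl X m - F. ((m - r) choose r) * mu x)"
      unfolding Q_def by (simp add: sum_distrib_left)
    also have "\<dots> \<le> (\<Sum>x\<in>lvl X m - F. card {y\<in>G. y \<subseteq> x} * ((2 * r) choose r))"
    proof (rule sum_mono)
      fix x assume "x \<in> lvl X m - F"
      moreover have "A \<subseteq> F" unfolding F_def by auto
      moreover have "2 * r \<le> m" using k1 unfolding m_def by simp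
      ultimately show "((m - r) choose r) * mu x \<le> card {y\<in>G. y \<subseteq> x} * ((2 * r) choose r)"
        unfolding mu_def G_def using step2[OF fX FL _ code] by auto
    qed
    also have "\<dots> = ((2 * r) choose r) * E2" unfolding E2_def by (simp add: sum_distrib_left mult.commute)
    finally show ?thesis .
  qed
  have muA: "mu x = 0" if "x \<in> A" for x
  proof -
    have "{a\<in>A. card (a - x) = r} = {}"
    proof (rule ccontr)
      assume "{a\<in>A. card (a - x) = r} \<noteq> {}"
      then obtain a where a: "a \<in> A" "card (a - x) = r" by auto
      have "a \<subseteq> X" "card a = m" "x \<subseteq> X" "card x = m" using a that AL by (auto simp: lvl_def)
      hence fa: "finite a" "card a = m" "finite x" "card x = m" using fX finite_subset by auto
      have "card (x - a) = r" using card_diff_sym[of a x] fa a by simp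
      have "card ((a - x) \<union> (x - a)) \<le> card (a - x) + card (x - a)" by (rule card_Un_le)
      hence "a = x" using code_eq[OF code a(1) that] a \<open>card (x - a) = r\<close> by auto
      thus False using a r1 by simp
    qed
    thus ?thesis unfolding mu_def by (metis card.empty)
  qed
  have PQ: "P + Q \<ge> card A * ((m choose r) * ((n - m) choose r))"
  proof -
    have "(\<Sum>x\<in>lvl X m. mu x) = (\<Sum>a\<in>A. card {x\<in>lvl X m. card (a - x) = r})"
      unfolding mu_def by (rule sum_card_swap[symmetric]) (use fA fL in auto)
    moreover have "(\<Sum>a\<in>A. (m choose r) * ((n - m) choose r)) \<le> (\<Sum>a\<in>A. card {x\<in>lvl X m. card (a - x) = r})"
    proof (rule sum_mono)
      fix a assume "a \<in> A"
      hence "a \<subseteq> X" "card a = m" using AL by (auto simp: lvl_def)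
      moreover have "r \<le> m" using k1 unfolding m_def by simp
      ultimately show "(m choose r) * ((n - m) choose r) \<le> card {x\<in>lvl X m. card (a - x) = r}"
        using per_a_count[OF fX] cX by simp
    qed
    moreover have "(\<Sum>x\<in>lvl X m. mu x) = P + (\<Sum>x\<in>lvl X m - T. mu x)"
      unfolding P_def using sum.subset_diff[OF TL fL] by (simp add: add.commute)
    moreover have "(\<Sum>x\<in>lvl X m - T. mu x) = Q"
      unfolding Q_def by (rule sum.mono_neutral_right) (use fL muA in \<open>auto simp: F_def\<close>)
    ultimately show ?thesis by (simp add: mult.commute)
  qed
  have mr: "m - r = k - 2 * r" "n - m = n - k + r" using k1 kn unfolding m_def by auto
  define ga where "ga = real n ^ r / (4 * (2 * real r) ^ (3 * r))"
  have ga0: "ga \<ge> 0" unfolding ga_def by simp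
  have D1p: "((n - k + r) choose r) > 0" by (simp add: zero_less_binomial_iff)
  have D2p: "((n - k + 3 * r) choose (2 * r)) > 0" by (simp add: zero_less_binomial_iff)
  have g2p: "((2 * r) choose r) > 0" by (simp add: zero_less_binomial_iff)
  have "r \<le> m" "r \<le> n - m" using k1 kn unfolding m_def by auto
  hence Kp: "(m choose r) * ((n - m) choose r) > 0" by (simp add: zero_less_binomial_iff)
  have c1D1: "(n - k + r) choose r \<le> k choose r" by (rule binomial_right_mono) (use k1 kn in simp)
  have c2D2: "(n - k + 3 * r) choose (2 * r) \<le> m choose (2 * r)"
    by (rule binomial_right_mono) (use k1 kn in \<open>simp add: m_def\<close>)
  have e1: "ga * real ((n - k + r) choose r) \<le> real ((m choose r) * ((n - m) choose r))"
  proof -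
    have "ga \<le> real ((k - r) choose r)" unfolding ga_def by (rule est1[OF r1 k1])
    hence "ga * real ((n - k + r) choose r) \<le> real ((k - r) choose r) * real ((n - k + r) choose r)"
      by (rule mult_right_mono) simp
    thus ?thesis using mr unfolding m_def by simp
  qed
  have e2: "ga * real ((2 * r) choose r) * real ((n - k + 3 * r) choose (2 * r))
      \<le> real ((m - r) choose r) * real ((m choose r) * ((n - m) choose r))"
  proof -
    have "ga * real (((2 * r) choose r) * ((n - k + 3 * r) choose (2 * r)))
     \<le> real (((k - 2 * r) choose r) * ((k - r) choose r) * ((n - k + r) choose r))"
      unfolding ga_def by (rule est2[OF r1 k1 k2])
    thus ?thesis using mr unfolding m_def by (simp add: mult.assoc)
  qed
  have main: "real (card G) \<ge> real (card S) + ga * real (card A)"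
  proof (rule final_arith[where t = "real (card T)" and P = "real P" and Q = "real Q"
      and EA = "real E1" and EB = "real E2" and DA = "real ((n - k + r) choose r)"
      and DB = "real ((n - k + 3 * r) choose (2 * r))" and cA = "real (k choose r)"
      and cB = "real (m choose (2 * r))" and gB = "real ((2 * r) choose r)"
      and be = "real ((m - r) choose r)" and Kc = "real ((m choose r) * ((n - m) choose r))"])
    show "real (card T) * real ((n - k + r) choose r) = real (card S) * real (k choose r) + real E1"
      using core1 by (metis of_nat_add of_nat_mult)
    show "real (card G) * real ((n - k + 3 * r) choose (2 * r))
        = (real (card T) + real (card A)) * real (m choose (2 * r)) + real E2"
      using core2 cF by (metis of_nat_add of_nat_mult)
    show "real ((2 * r) choose r) * real E2 \<ge> real ((m - r) choose r) * real Q"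
      using E2Q by (metis of_nat_le_iff of_nat_mult)
    show "real P + real Q \<ge> real (card A) * real ((m choose r) * ((n - m) choose r))"
      using PQ by (metis of_nat_le_iff of_nat_mult of_nat_add)
  qed (use ga0 D1p D2p g2p Kp c1D1 c2D2 E1P e1 e2 in auto)
  have "real (card G) \<le> real (card (shadow (3 * r) S \<union> shadow (2 * r) A))" using cG by simp
  moreover have "ga * real (card A) = real n ^ r * real (card A) / (4 * (2 * real r) ^ (3 * r))"
    unfolding ga_def by simp
  ultimately show ?thesis using main by linarith
qed

end
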